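(* For all integers $n,k,d$ with $2\le k\le d<n$, there exists a directed graph $G$ on $\{D\}\cup[n]$ that satisfies the $d$-propagating-dealer property and satisfies $$\Gamma_{\text{sota}}(G)\ge\frac{n(n+1)}{4d}.$$
   Context: $G$ is a directed graph on $\{D\}\cup[n]$, $D$ the dealer, $[n]$ the participants; $\mathcal N(D)$ is the set of out-neighbours of $D$. $G$ satisfies the $d$-propagating-dealer property if there is an ordering of the $n$ participants such that every participant either has an incoming edge from $D$ or has incoming edges from at least $d$ participants preceding it in the ordering. For a participant $i$ and integer $w\ge k$, let $\ell_w(D\to i)$ be the minimum, over all families of $w$ internally vertex-disjoint directed paths from $D$ to $i$, of the average length (number of edges) of the paths in the family, with $\ell_w(D\to i)=\infty$ if no such family exists. The communication complexity of the state-of-the-art (separate secure transmissions) scheme is $$\Gamma_{\text{sota}}(G)=|\mathcal N(D)|+\sum_{i\notin\mathcal N(D)}\min_{w\ge k}\Big[\frac{w}{w-k+1}\,\ell_w(D\to i)\Big].$$ *)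

theory Defs
  imports "HOL-Library.Extended_Real"
begin

text \<open>Vertex 0 is the dealer D; participants are 1..n. A directed graph on
{D} \<union> [n] is an edge set E \<subseteq> {0..n} \<times> {0..n}.\<close>

definition is_digraph :: "nat \<Rightarrow> (nat \<times> nat) set \<Rightarrow> bool" where
  "is_digraph n E \<longleftrightarrow> E \<subseteq> {0..n} \<times> {0..n}"

definition dealer_nbrs :: "nat \<Rightarrow> (nat \<times> nat) set \<Rightarrow> nat set" where
  "dealer_nbrs n E = {i \<in> {1..n}. (0, i) \<in> E}"

definition propagating_dealer :: "nat \<Rightarrow> nat \<Rightarrow> (nat \<times> nat) set \<Rightarrow> bool" where
  "propagating_dealer n d E \<longleftrightarrow>
     (\<exists>pos :: nat \<Rightarrow> nat. bij_betw pos {1..n} {1..n} \<and>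
        (\<forall>i \<in> {1..n}. (0, i) \<in> E \<or>
            card {j \<in> {1..n}. pos j < pos i \<and> (j, i) \<in> E} \<ge> d))"

definition is_path :: "(nat \<times> nat) set \<Rightarrow> nat \<Rightarrow> nat \<Rightarrow> nat list \<Rightarrow> bool" where
  "is_path E u v p \<longleftrightarrow> p \<noteq> [] \<and> hd p = u \<and> last p = v \<and> distinct p \<and>
     (\<forall>j. Suc j < length p \<longrightarrow> (p ! j, p ! Suc j) \<in> E)"

definition path_len :: "nat list \<Rightarrow> nat" where
  "path_len p = length p - 1"

definition internal :: "nat list \<Rightarrow> nat set" where
  "internal p = set (butlast (tl p))"

definition disjoint_family :: "(nat \<times> nat) set \<Rightarrow> nat \<Rightarrow> nat \<Rightarrow> nat list list \<Rightarrow> bool" where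
  "disjoint_family E i w ps \<longleftrightarrow> length ps = w \<and> distinct ps \<and>
     (\<forall>p \<in> set ps. is_path E 0 i p) \<and>
     (\<forall>a < w. \<forall>b < w. a \<noteq> b \<longrightarrow> internal (ps ! a) \<inter> internal (ps ! b) = {})"

text \<open>\<ell>_w(D \<rightarrow> i): minimum average length, \<infinity> if no family exists.\<close>
definition avg_len :: "(nat \<times> nat) set \<Rightarrow> nat \<Rightarrow> nat \<Rightarrow> ereal" where
  "avg_len E w i = (INF ps \<in> {ps. disjoint_family E i w ps}.
       ereal ((\<Sum>p\<leftarrow>ps. real (path_len p)) / real w))"

definition gamma_sota :: "nat \<Rightarrow> nat \<Rightarrow> (nat \<times> nat) set \<Rightarrow> ereal" where
  "gamma_sota n k E = ereal (real (card (dealer_nbrs n E))) +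
     (\<Sum>i \<in> {1..n} - dealer_nbrs n E.
        (INF w \<in> {w. w \<ge> k}. ereal (real w / real (w - k + 1)) * avg_len E w i))"

end

theory Submission
  imports Defs
begin

definition chainE :: "nat \<Rightarrow> nat \<Rightarrow> (nat \<times> nat) set" where
  "chainE n d = {(0,i) | i. 1 \<le> i \<and> i \<le> d} \<union> {(j,i) | j i. 1 \<le> j \<and> j < i \<and> i \<le> n \<and> i \<le> j + d}"

lemma chain_digraph: "d \<le> n \<Longrightarrow> is_digraph n (chainE n d)"
  unfolding is_digraph_def chainE_def by auto

lemma chain_nbrs: "d \<le> n \<Longrightarrow> dealer_nbrs n (chainE n d) = {1..d}"
  unfolding dealer_nbrs_def chainE_def by auto

lemma chain_prop: assumes "d \<le> n" shows "propagating_dealer n d (chainE n d)"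
  unfolding propagating_dealer_def
proof (intro exI[of _ id] conjI ballI)
  show "bij_betw id {1..n} {1..n}" by simp
  fix i assume i: "i \<in> {1..n}"
  show "(0, i) \<in> chainE n d \<or> d \<le> card {j \<in> {1..n}. id j < id i \<and> (j, i) \<in> chainE n d}"
  proof (cases "i \<le> d")
    case True then show ?thesis using i unfolding chainE_def by auto
  next
    case False
    have "{j \<in> {1..n}. id j < id i \<and> (j, i) \<in> chainE n d} = {i-d..<i}"
      using False i unfolding chainE_def by auto
    then show ?thesis using False by simp
  qed
qed

lemma chain_path_len:
  assumes "is_path (chainE n d) 0 i p"
  shows "i \<le> d * path_len p"
proof -
  have ne: "p \<noteq> []" and h: "hd p = 0" and l: "last p = i"
    and e: "\<And>j. Suc j < length p \<Longrightarrow> (p ! j, p ! Suc j) \<in> chainE n d"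
    using assms unfolding is_path_def by auto
  have step: "\<And>a b. (a,b) \<in> chainE n d \<Longrightarrow> b \<le> a + d" unfolding chainE_def by auto
  have "\<And>j. j < length p \<Longrightarrow> p ! j \<le> d * j"
  proof -
    fix j show "j < length p \<Longrightarrow> p ! j \<le> d * j"
    proof (induction j)
      case 0 then show ?case using h ne by (simp add: hd_conv_nth)
    next
      case (Suc j)
      then have "p ! Suc j \<le> p ! j + d" using step e by blast
      then show ?case using Suc by simp
    qed
  qed
  moreover have "last p = p ! (length p - 1)" using ne by (simp add: last_conv_nth)
  ultimately show ?thesis using l ne unfolding path_len_def by simp
qed

lemma avg_bound:
  assumes "w > 0"
  shows "avg_len (chainE n d) w i \<ge> ereal (real i / real d)"
  unfolding avg_len_def
proof (rule INF_greatest)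
  fix ps assume "ps \<in> {ps. disjoint_family (chainE n d) i w ps}"
  then have len: "length ps = w" and pp: "\<forall>p \<in> set ps. is_path (chainE n d) 0 i p"
    unfolding disjoint_family_def by auto
  have "\<forall>p \<in> set ps. real i / real d \<le> real (path_len p)"
  proof
    fix p assume "p \<in> set ps"
    then have "i \<le> d * path_len p" using pp chain_path_len by blast
    then have "real i \<le> real d * real (path_len p)" by (metis of_nat_le_iff of_nat_mult)
    then show "real i / real d \<le> real (path_len p)"
      by (cases "d = 0") (auto simp: divide_le_eq mult.commute)
  qed
  then have "(\<Sum>p\<leftarrow>ps. real i / real d) \<le> (\<Sum>p\<leftarrow>ps. real (path_len p))"
    by (intro sum_list_mono) auto
  then have "real w * (real i / real d) \<le> (\<Sum>p\<leftarrow>ps. real (path_len p))"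
    using len by (simp add: sum_list_triv)
  then have "real i / real d \<le> (\<Sum>p\<leftarrow>ps. real (path_len p)) / real w"
    using assms by (simp add: le_divide_eq mult.commute)
  then show "ereal (real i / real d) \<le> ereal ((\<Sum>p\<leftarrow>ps. real (path_len p)) / real w)"
    by simp
qed

lemma term_bound:
  assumes "1 \<le> k"
  shows "(INF w \<in> {w. w \<ge> k}. ereal (real w / real (w - k + 1)) * avg_len (chainE n d) w i)
     \<ge> ereal (real i / real d)"
proof (rule INF_greatest)
  fix w assume "w \<in> {w. w \<ge> k}"
  then have w: "w \<ge> k" by simp
  have c1: "real w / real (w - k + 1) \<ge> 1" using w assms by simp
  have a: "avg_len (chainE n d) w i \<ge> ereal (real i / real d)" using w assms avg_bound by simp
  have "ereal (real i / real d) \<le> ereal (real w / real (w - k + 1)) * ereal (real i / real d)"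
  proof -
    have "real i / real d \<le> (real w / real (w - k + 1)) * (real i / real d)"
      using mult_right_mono[OF c1, of "real i / real d"] by simp
    then show ?thesis by simp
  qed
  also have "\<dots> \<le> ereal (real w / real (w - k + 1)) * avg_len (chainE n d) w i"
    using a c1 by (intro ereal_mult_left_mono) auto
  finally show "ereal (real i / real d) \<le> ereal (real w / real (w - k + 1)) * avg_len (chainE n d) w i" .
qed

lemma gauss_real: "(\<Sum>i\<in>{1..n}. real i) = real n * (real n + 1) / 2"
  by (induction n) (auto simp: field_simps)

theorem mainTheorem9:
  fixes n k d :: nat
  assumes "2 \<le> k" and "k \<le> d" and "d < n"
  shows "\<exists>E. is_digraph n E \<and> propagating_dealer n d E \<and>
           gamma_sota n k E \<ge> ereal (real n * (real n + 1) / (4 * real d))"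
proof (intro exI[of _ "chainE n d"] conjI)
  have dn: "d \<le> n" using assms by simp
  have dpos: "real d > 0" using assms by simp
  show "is_digraph n (chainE n d)" using chain_digraph dn .
  show "propagating_dealer n d (chainE n d)" using chain_prop dn .
  let ?R = "{1..n} - {1..d}"
  have "ereal (real d) + (\<Sum>i\<in>?R. ereal (real i / real d)) \<le> gamma_sota n k (chainE n d)"
    unfolding gamma_sota_def chain_nbrs[OF dn] card_atLeastAtMost diff_Suc_1
  proof (rule add_left_mono, rule sum_mono)
    fix i show "ereal (real i / real d) \<le> (INF w \<in> {w. w \<ge> k}. ereal (real w / real (w - k + 1)) * avg_len (chainE n d) w i)"
      using assms by (intro term_bound) simp
  qed
  moreover have "ereal (real d) + (\<Sum>i\<in>?R. ereal (real i / real d))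
     = ereal (real d + (\<Sum>i\<in>?R. real i / real d))" by simp
  moreover have "real n * (real n + 1) / (4 * real d) \<le> real d + (\<Sum>i\<in>?R. real i / real d)"
  proof -
    have split: "{1..n} = {1..d} \<union> ?R" using dn by auto
    have "(\<Sum>i\<in>{1..n}. real i / real d) = (\<Sum>i\<in>{1..d}. real i / real d) + (\<Sum>i\<in>?R. real i / real d)"
      by (subst split, rule sum.union_disjoint) auto
    moreover have "(\<Sum>i\<in>{1..d}. real i / real d) \<le> (\<Sum>i\<in>{1..d}. 1)"
      using dpos by (intro sum_mono) (auto simp: divide_le_eq)
    moreover have "(\<Sum>i\<in>{1..n}. real i / real d) = real n * (real n + 1) / (2 * real d)"
      using gauss_real[of n] dpos by (simp add: sum_divide_distrib[symmetric] field_simps)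
    moreover have "real n * (real n + 1) / (4 * real d) \<le> real n * (real n + 1) / (2 * real d)"
      using dpos by (intro divide_left_mono) auto
    ultimately show ?thesis by simp
  qed
  ultimately show "gamma_sota n k (chainE n d) \<ge> ereal (real n * (real n + 1) / (4 * real d))"
    by (metis ereal_less_eq(3) order_trans)
qed

end
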